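(* Let $p\ge2$ be an integer, $t_*,\rho\in\mathbb{R}$, and let $Y\subset\mathbb{R}$ be a set that is not bounded above. Let $X\subset\mathbb{R}$ contain $t_*+y$ for every $y\in Y$ with $y>\rho$. Let $\Lambda: X-Y\to[0,\infty)$ satisfy $\Lambda(t_* )>0$ and \[ \lim_{y\in Y,\ y\to\infty}\Lambda(x_0-y)\,\Lambda(t_*+y-y_0)=0 \quad\text{for all } x_0\in X,\ y_0\in Y. \] If $\det(\Lambda(x_j-y_k))_{j,k=1}^p\ge0$ for all $\mathbf{x}\in\operatorname{inc}(X,p)$ and $\mathbf{y}\in\operatorname{inc}(Y,p)$, then the kernel $X\times Y\to\mathbb{R}$, $(x,y)\mapsto\Lambda(x-y)$, is $\mathrm{TN}_p$.
   Context: For a totally ordered set $X$ and integer $r \geq 1$, $\operatorname{inc}(X,r)$ denotes the set of $r$-tuples $(x_1,\dots,x_r) \in X^r$ with $x_1 < \cdots < x_r$. $X-Y=\{x-y:x\in X,y\in Y\}$. For $X,Y \subset \mathbb{R}$, a kernel $K : X \times Y \to \mathbb{R}$ is $\mathrm{TN}_p$ if $\det (K(x_j,y_k))_{j,k=1}^r \geq 0$ for all $1 \leq r \leq p$ and all $\mathbf{x} \in \operatorname{inc}(X,r)$, $\mathbf{y} \in \operatorname{inc}(Y,r)$. *)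

theory Defs
  imports Complex_Main "Jordan_Normal_Form.Determinant"
begin

definition inc :: "real set \<Rightarrow> nat \<Rightarrow> (nat \<Rightarrow> real) set" where
  "inc X r = {x. (\<forall>i<r. x i \<in> X) \<and> (\<forall>i j. i < j \<and> j < r \<longrightarrow> x i < x j)}"

definition setdiff_mink :: "real set \<Rightarrow> real set \<Rightarrow> real set" where
  "setdiff_mink X Y = {x - y | x y. x \<in> X \<and> y \<in> Y}"

definition TN :: "nat \<Rightarrow> real set \<Rightarrow> real set \<Rightarrow> (real \<Rightarrow> real \<Rightarrow> real) \<Rightarrow> bool" where
  "TN p X Y K \<longleftrightarrow> (\<forall>r. 1 \<le> r \<and> r \<le> p \<longrightarrow>
     (\<forall>x\<in>inc X r. \<forall>y\<in>inc Y r. det (mat r r (\<lambda>(j,k). K (x j) (y k))) \<ge> 0))"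

end

theory Submission imports Defs begin

lemma perm_limit:
  fixes F :: "real filter" and \<Lambda> :: "real \<Rightarrow> real" and x y :: "nat \<Rightarrow> real"
  assumes lim: "\<And>j k. j < r \<Longrightarrow> k < r \<Longrightarrow> ((\<lambda>z. \<Lambda> (x j - z) * \<Lambda> (tstar + z - y k)) \<longlongrightarrow> 0) F"
    and pi: "\<pi> permutes {0..<Suc r}"
  defines "Mz \<equiv> \<lambda>z. mat (Suc r) (Suc r) (\<lambda>(j,k). \<Lambda> ((if j = r then tstar + z else x j) - (if k = r then z else y k)))"
    and "N \<equiv> mat (Suc r) (Suc r) (\<lambda>(j,k). if j < r \<and> k < r then \<Lambda> (x j - y k) else if j = r \<and> k = r then \<Lambda> tstar else 0)"
  shows "((\<lambda>z. \<Prod>i = 0..<Suc r. Mz z $$ (i, \<pi> i)) \<longlongrightarrow> (\<Prod>i = 0..<Suc r. N $$ (i, \<pi> i))) F"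
proof -
  have inr: "\<And>i. i < Suc r \<Longrightarrow> \<pi> i < Suc r" using permutes_in_image[OF pi] by auto
  have injp: "\<And>a b. \<pi> a = \<pi> b \<Longrightarrow> a = b" using permutes_inj[OF pi] by (meson injD)
  show ?thesis
  proof (cases "\<pi> r = r")
    case True
    have "(\<Prod>i = 0..<Suc r. Mz z $$ (i, \<pi> i)) = (\<Prod>i = 0..<Suc r. N $$ (i, \<pi> i))" for z
    proof (rule prod.cong)
      fix i assume i: "i \<in> {0..<Suc r}"
      show "Mz z $$ (i, \<pi> i) = N $$ (i, \<pi> i)"
      proof (cases "i = r")
        case True then show ?thesis using \<open>\<pi> r = r\<close> by (simp add: Mz_def N_def)
      next
        case False
        then have "\<pi> i \<noteq> r" using injp \<open>\<pi> r = r\<close> by metis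
        then show ?thesis using i inr[of i] False by (simp add: Mz_def N_def)
      qed
    qed simp
    then show ?thesis by simp
  next
    case False
    have "r \<in> {0..<Suc r}" by simp
    then obtain j where j: "j < Suc r" "\<pi> j = r" using permutes_image[OF pi] by (metis atLeastLessThan_iff imageE)
    have jr: "j \<noteq> r" using j False by auto
    define k where "k = \<pi> r"
    have k: "k < r" using inr[of r] False k_def by auto
    define R where "R = {0..<Suc r} - {r} - {j}"
    have split: "(\<Prod>i = 0..<Suc r. f i) = f r * (f j * prod f R)" for f :: "nat \<Rightarrow> real"
    proof -
      have "(\<Prod>i = 0..<Suc r. f i) = f r * prod f ({0..<Suc r} - {r})" by (rule prod.remove) auto
      also have "prod f ({0..<Suc r} - {r}) = f j * prod f R"
        unfolding R_def using j jr by (subst prod.remove[of _ j]) auto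
      finally show ?thesis .
    qed
    have Rprop: "\<And>i. i \<in> R \<Longrightarrow> i < r \<and> \<pi> i < r"
    proof -
      fix i assume "i \<in> R"
      then have "i < r" "i \<noteq> j" by (auto simp: R_def)
      then have "\<pi> i \<noteq> r" using j injp by metis
      then show "i < r \<and> \<pi> i < r" using inr[of i] \<open>i<r\<close> by auto
    qed
    define C where "C = (\<Prod>i\<in>R. \<Lambda> (x i - y (\<pi> i)))"
    have eqM: "(\<Prod>i = 0..<Suc r. Mz z $$ (i, \<pi> i)) = (\<Lambda> (x j - z) * \<Lambda> (tstar + z - y k)) * C" for z
    proof -
      have "prod (\<lambda>i. Mz z $$ (i, \<pi> i)) R = C" unfolding C_def
        proof (rule prod.cong)
          fix i assume "i \<in> R" then have "i < r" "\<pi> i < r" using Rprop by auto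
          then show "Mz z $$ (i, \<pi> i) = \<Lambda> (x i - y (\<pi> i))" by (simp add: Mz_def)
        qed simp
      then show ?thesis unfolding split using j jr k k_def by (simp add: Mz_def)
    qed
    have eqN: "(\<Prod>i = 0..<Suc r. N $$ (i, \<pi> i)) = 0"
      unfolding split using k k_def by (simp add: N_def)
    show ?thesis unfolding eqM eqN
      by (rule tendsto_mult_left_zero, rule lim) (use j jr k in auto)
  qed
qed

lemma step:
  fixes \<Lambda> :: "real \<Rightarrow> real" and x y :: "nat \<Rightarrow> real"
  assumes unb: "\<not> bdd_above Y"
    and XY: "\<forall>y\<in>Y. y > \<rho> \<longrightarrow> tstar + y \<in> X"
    and pos: "\<Lambda> tstar > 0"
    and lim: "\<forall>x0\<in>X. \<forall>y0\<in>Y.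
           ((\<lambda>y. \<Lambda> (x0 - y) * \<Lambda> (tstar + y - y0)) \<longlongrightarrow> 0) (inf at_top (principal Y))"
    and Q: "\<forall>x\<in>inc X (Suc r). \<forall>y\<in>inc Y (Suc r). det (mat (Suc r) (Suc r) (\<lambda>(j,k). \<Lambda> (x j - y k))) \<ge> 0"
    and x: "x \<in> inc X r" and y: "y \<in> inc Y r"
  shows "det (mat r r (\<lambda>(j,k). \<Lambda> (x j - y k))) \<ge> 0"
proof -
  define F where "F = inf (at_top :: real filter) (principal Y)"
  define Mz where "Mz \<equiv> \<lambda>z. mat (Suc r) (Suc r) (\<lambda>(j,k). \<Lambda> ((if j = r then tstar + z else x j) - (if k = r then z else y k)))"
  define N where "N \<equiv> mat (Suc r) (Suc r) (\<lambda>(j,k). if j < r \<and> k < r then \<Lambda> (x j - y k) else if j = r \<and> k = r then \<Lambda> tstar else 0)"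
  define A where "A = mat r r (\<lambda>(j,k). \<Lambda> (x j - y k))"
  have xX: "\<And>i. i < r \<Longrightarrow> x i \<in> X" and xinc: "\<And>i j. i < j \<Longrightarrow> j < r \<Longrightarrow> x i < x j"
    using x unfolding inc_def by auto
  have yY: "\<And>i. i < r \<Longrightarrow> y i \<in> Y" and yinc: "\<And>i j. i < j \<Longrightarrow> j < r \<Longrightarrow> y i < y j"
    using y unfolding inc_def by auto
  have Fnb: "F \<noteq> bot"
  proof
    assume "F = bot"
    then have "eventually (\<lambda>z. False) F" by simp
    then have "eventually (\<lambda>z. z \<in> Y \<longrightarrow> False) (at_top :: real filter)"
      unfolding F_def eventually_inf_principal .
    then obtain M where "\<forall>z\<ge>M. z \<notin> Y" unfolding eventually_at_top_linorder by auto
    then have "bdd_above Y" unfolding bdd_above_def by (meson linorder_not_le order_less_imp_le)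
    with unb show False by simp
  qed
  define B where "B = Max ({\<rho>} \<union> (\<lambda>i. x i - tstar) ` {..<r} \<union> y ` {..<r})"
  have Bge: "\<rho> \<le> B" "\<And>i. i < r \<Longrightarrow> x i - tstar \<le> B" "\<And>i. i < r \<Longrightarrow> y i \<le> B"
    unfolding B_def by (auto intro: Max_ge)
  have ev: "eventually (\<lambda>z. det (Mz z) \<ge> 0) F"
  proof -
    have "eventually (\<lambda>z. z > B) (at_top :: real filter)" by (rule eventually_gt_at_top)
    then have "eventually (\<lambda>z. z \<in> Y \<longrightarrow> det (Mz z) \<ge> 0) (at_top :: real filter)"
    proof (rule eventually_mono)
      fix z assume zB: "z > B"
      show "z \<in> Y \<longrightarrow> det (Mz z) \<ge> 0"
      proof
        assume zY: "z \<in> Y"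
        have "tstar + z \<in> X" using XY zY zB Bge(1) by auto
        have 1: "(\<lambda>i. if i = r then tstar + z else x i) \<in> inc X (Suc r)"
          unfolding inc_def using \<open>tstar + z \<in> X\<close> xX xinc Bge(2) zB
          by (auto simp: less_Suc_eq) (smt (verit) less_Suc_eq)+
        have 2: "(\<lambda>i. if i = r then z else y i) \<in> inc Y (Suc r)"
          unfolding inc_def using zY yY yinc Bge(3) zB
          by (auto simp: less_Suc_eq) (smt (verit) less_Suc_eq)+
        show "det (Mz z) \<ge> 0" using Q 1 2 unfolding Mz_def by fastforce
      qed
    qed
    then show ?thesis unfolding F_def eventually_inf_principal .
  qed
  have lim2: "\<And>j k. j < r \<Longrightarrow> k < r \<Longrightarrow> ((\<lambda>z. \<Lambda> (x j - z) * \<Lambda> (tstar + z - y k)) \<longlongrightarrow> 0) F"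
    using lim xX yY unfolding F_def by auto
  have tl: "((\<lambda>z. det (Mz z)) \<longlongrightarrow> det N) F"
  proof -
    have dM: "det (Mz z) = (\<Sum>p \<in> {p. p permutes {0..<Suc r}}. of_int (sign p) * (\<Prod>i = 0..<Suc r. Mz z $$ (i, p i)))" for z
      unfolding det_def by (simp add: Mz_def)
    have dN: "det N = (\<Sum>p \<in> {p. p permutes {0..<Suc r}}. of_int (sign p) * (\<Prod>i = 0..<Suc r. N $$ (i, p i)))"
      unfolding det_def by (simp add: N_def)
    show ?thesis unfolding dM dN
      apply (rule tendsto_sum)
      apply (rule tendsto_mult_left)
      unfolding Mz_def N_def
      apply (rule perm_limit[OF lim2])
      by auto
  qed
  have "0 \<le> det N" using tendsto_lowerbound[OF tl ev Fnb] .
  also have "det N = \<Lambda> tstar * det A"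
  proof -
    have "det N = (\<Sum>j<Suc r. N $$ (r,j) * cofactor N r j)"
      by (rule laplace_expansion_row) (auto simp: N_def)
    also have "\<dots> = N $$ (r,r) * cofactor N r r"
      by (subst sum.remove[of _ r]) (auto simp: N_def intro!: sum.neutral)
    also have "mat_delete N r r = A"
      by (rule eq_matI) (auto simp: mat_delete_def N_def A_def)
    then have "cofactor N r r = det A" unfolding cofactor_def by simp
    finally show ?thesis by (simp add: N_def)
  qed
  finally show ?thesis using pos unfolding A_def by (simp add: zero_le_mult_iff)
qed

theorem mainTheorem19:
  fixes p :: nat and tstar \<rho> :: real and X Y :: "real set" and \<Lambda> :: "real \<Rightarrow> real"
  assumes "p \<ge> 2"
    and "\<not> bdd_above Y"
    and "\<forall>y\<in>Y. y > \<rho> \<longrightarrow> tstar + y \<in> X"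
    and "\<forall>z\<in>setdiff_mink X Y. \<Lambda> z \<ge> 0"
    and "\<Lambda> tstar > 0"
    and "\<forall>x0\<in>X. \<forall>y0\<in>Y.
           ((\<lambda>y. \<Lambda> (x0 - y) * \<Lambda> (tstar + y - y0)) \<longlongrightarrow> 0) (inf at_top (principal Y))"
    and "\<forall>x\<in>inc X p. \<forall>y\<in>inc Y p. det (mat p p (\<lambda>(j,k). \<Lambda> (x j - y k))) \<ge> 0"
  shows "TN p X Y (\<lambda>x y. \<Lambda> (x - y))"
proof -
  let ?Q = "\<lambda>r. \<forall>x\<in>inc X r. \<forall>y\<in>inc Y r. det (mat r r (\<lambda>(j,k). \<Lambda> (x j - y k))) \<ge> 0"
  have "?Q (p - k)" if "k < p" for k
    using that
  proof (induction k)
    case 0 then show ?case using assms(7) by simp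
  next
    case (Suc k)
    then have IH: "?Q (Suc (p - Suc k))" by (simp add: Suc_diff_Suc)
    show ?case
      using step[OF assms(2) assms(3) assms(5) assms(6) IH] by blast
  qed
  then show ?thesis unfolding TN_def
  proof (intro allI impI)
    fix r assume H: "\<And>k. k < p \<Longrightarrow> ?Q (p - k)" and r: "1 \<le> r \<and> r \<le> p"
    have "p - r < p" using r by simp
    from H[OF this] have "?Q (p - (p - r))" .
    moreover have "p - (p - r) = r" using r by simp
    ultimately show "\<forall>x\<in>inc X r. \<forall>y\<in>inc Y r. 0 \<le> det (mat r r (\<lambda>(j, k). \<Lambda> (x j - y k)))"
      using r by simp
  qed
qed

end
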